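(* Let $P$ be a priority forest on $[n]_0$ with $m$ edges, and let $I_P=[\hat0,P]$ be its principal ideal in $\Pi(n)$. Then $$\chi(I_P,q)=q^{m-\mathrm{sasc}(P)}(q-1)^{\mathrm{sasc}(P)}=q^{m-\mathrm{lucky}(\pi)}(q-1)^{\mathrm{lucky}(\pi)},$$ where $\pi$ is any $(m,n)$-parking function whose priority forest is $P$.
   Context: $[n]_0=\{0,\dots,n\}$, $[n]=\{1,\dots,n\}$. A priority forest on $[n]_0$ is a rooted forest with vertex set $[n]_0$ whose component trees $T_0,T_1,\dots$ are increasing (each non-root vertex has a larger label than its parent) and satisfy: for $j<k$ every label of $T_j$ is smaller than every label of $T_k$. $\Pi(n)$ is the poset of priority forests on $[n]_0$ ordered by inclusion of edge sets, together with an extra top element $\hat1$; $\hat0$ is the edgeless forest; the rank of a priority forest is its number of edges. For the interval $I_P=[\hat0,P]$ with $\rho(x)=|E(x)|$, its characteristic polynomial is $\chi(I_P,q)=\sum_{x\in I_P}\mu(\hat0,x)\,q^{\rho(P)-\rho(x)}$, where $\mu$ is the Möbius function. A small ascent of $P$ is a non-root vertex $i$ whose parent is $i-1$; $\mathrm{sasc}(P)$ is their number. An $(m,n)$-parking function is a map $\pi:[m]\to[n]$ such that when cars $1,\dots,m$ arrive in order to spots $1,\dots,n$ and car $i$ parks in the first empty spot $\ge\pi(i)$, all cars park. Its bird's eye permutation $\omega_\pi$ is the partial map sending each occupied spot to the car parked there. Its priority forest is the forest on $[n]_0$ in which an occupied spot $i$ is a non-root vertex with parent $\pi(\omega_\pi(i))-1$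 and an empty spot (and $0$) is a root; this is a priority forest with $m$ edges. A car is lucky if it parks at its preferred spot $\pi(i)$; $\mathrm{lucky}(\pi)$ is the number of lucky cars. *)

theory Defs
  imports "HOL-Computational_Algebra.Polynomial"
begin

definition connected_in :: "(nat \<times> nat) set \<Rightarrow> nat \<Rightarrow> nat \<Rightarrow> bool" where
  "connected_in E x y \<longleftrightarrow> (x, y) \<in> (E \<union> E\<inverse>)\<^sup>*"

definition priority_forest :: "nat \<Rightarrow> (nat \<times> nat) set \<Rightarrow> bool" where
  "priority_forest n E \<longleftrightarrow>
     E \<subseteq> {0..n} \<times> {0..n}
   \<and> (\<forall>p c. (p, c) \<in> E \<longrightarrow> p < c)
   \<and> (\<forall>p p' c. (p, c) \<in> E \<and> (p', c) \<in> E \<longrightarrow> p = p')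
   \<and> (\<forall>a b c d. a \<in> {0..n} \<and> b \<in> {0..n} \<and> c \<in> {0..n} \<and> d \<in> {0..n} \<and>
        connected_in E a c \<and> connected_in E b d \<and> \<not> connected_in E a b \<and> a < b \<longrightarrow> c < d)"

text \<open>Principal ideal [0, P] of Pi(n) (it does not contain the extra top element).\<close>
definition ideal_PF :: "nat \<Rightarrow> (nat \<times> nat) set \<Rightarrow> (nat \<times> nat) set set" where
  "ideal_PF n E = {Q. priority_forest n Q \<and> Q \<subseteq> E}"

function mobius :: "'a set set \<Rightarrow> 'a set \<Rightarrow> 'a set \<Rightarrow> int" where
  "mobius F b x =
     (if x = b then 1
      else if infinite x \<or> \<not> b \<subseteq> x then 0
      else - (\<Sum>z\<in>{z \<in> F. b \<subseteq> z \<and> z \<subset> x}. mobius F b z))"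
  by auto
termination
  by (relation "measure (\<lambda>(F, b, x). card x)") (auto intro: psubset_card_mono)

definition char_poly_PF :: "nat \<Rightarrow> (nat \<times> nat) set \<Rightarrow> int poly" where
  "char_poly_PF n E =
     (\<Sum>Q\<in>ideal_PF n E. smult (mobius (ideal_PF n E) {} Q) (monom 1 (card E - card Q)))"

definition sasc :: "nat \<Rightarrow> (nat \<times> nat) set \<Rightarrow> nat" where
  "sasc n E = card {i \<in> {1..n}. (i - 1, i) \<in> E}"

fun occ :: "(nat \<Rightarrow> nat) \<Rightarrow> nat \<Rightarrow> nat set" where
  "occ \<pi> 0 = {}"
| "occ \<pi> (Suc k) = insert (LEAST s. \<pi> (Suc k) \<le> s \<and> s \<notin> occ \<pi> k) (occ \<pi> k)"

definition spot :: "(nat \<Rightarrow> nat) \<Rightarrow> nat \<Rightarrow> nat" where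
  "spot \<pi> i = (LEAST s. \<pi> i \<le> s \<and> s \<notin> occ \<pi> (i - 1))"

definition parking_function :: "nat \<Rightarrow> nat \<Rightarrow> (nat \<Rightarrow> nat) \<Rightarrow> bool" where
  "parking_function m n \<pi> \<longleftrightarrow> (\<forall>i \<in> {1..m}. \<pi> i \<in> {1..n} \<and> spot \<pi> i \<le> n)"

definition birds_eye :: "nat \<Rightarrow> (nat \<Rightarrow> nat) \<Rightarrow> nat \<Rightarrow> nat" where
  "birds_eye m \<pi> s = (THE i. i \<in> {1..m} \<and> spot \<pi> i = s)"

definition pf_forest :: "nat \<Rightarrow> (nat \<Rightarrow> nat) \<Rightarrow> (nat \<times> nat) set" where
  "pf_forest m \<pi> = {(\<pi> (birds_eye m \<pi> s) - 1, s) | s. s \<in> spot \<pi> ` {1..m}}"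

definition lucky :: "nat \<Rightarrow> (nat \<Rightarrow> nat) \<Rightarrow> nat" where
  "lucky m \<pi> = card {i \<in> {1..m}. spot \<pi> i = \<pi> i}"

end

theory Submission
  imports Defs
begin

declare mobius.simps[simp del]

definition Asc :: "(nat \<times> nat) set \<Rightarrow> (nat \<times> nat) set" where
  "Asc E = {e \<in> E. snd e = Suc (fst e)}"

definition rt :: "(nat \<times> nat) set \<Rightarrow> nat \<Rightarrow> nat" where
  "rt x v = (LEAST r. (r, v) \<in> x\<^sup>*)"

lemma pf_finite: "priority_forest n E \<Longrightarrow> finite E"
  unfolding priority_forest_def by (meson finite_SigmaI finite_atLeastAtMost finite_subset)

lemma rt_edge:
  assumes lt: "\<forall>p c. (p,c)\<in>x \<longrightarrow> p<c"
    and un: "\<forall>p p' c. (p,c)\<in>x \<and> (p',c)\<in>x \<longrightarrow> p=p'"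
    and e: "(u,v)\<in>x"
  shows "rt x v = rt x u"
proof -
  have anc: "r = v \<or> (r,u)\<in>x\<^sup>*" if "(r,v)\<in>x\<^sup>*" for r
    using that by (rule rtranclE) (use un e in blast)+
  have uv: "u < v" using lt e by blast
  let ?l = "LEAST r. (r,u)\<in>x\<^sup>*"
  have l1: "(?l,u)\<in>x\<^sup>*" by (rule LeastI[of _ u]) simp
  have "(LEAST r. (r,v)\<in>x\<^sup>*) = ?l"
  proof (rule Least_equality)
    show "(?l,v)\<in>x\<^sup>*" using l1 e by (rule rtrancl_into_rtrancl)
    fix y assume "(y,v)\<in>x\<^sup>*"
    then have "y = v \<or> (y,u)\<in>x\<^sup>*" by (rule anc)
    then show "?l \<le> y"
    proof
      assume "y = v" then show ?thesis using Least_le[of "\<lambda>r. (r,u)\<in>x\<^sup>*" u] uv by simp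
    next
      assume "(y,u)\<in>x\<^sup>*" then show ?thesis by (rule Least_le)
    qed
  qed
  thus ?thesis by (simp add: rt_def)
qed

lemma rt_root:
  assumes "\<not>(\<exists>q. (q,v)\<in>x)" shows "rt x v = v"
  unfolding rt_def
proof (rule Least_equality)
  show "(v,v)\<in>x\<^sup>*" by simp
  fix y assume "(y,v)\<in>x\<^sup>*"
  then show "v \<le> y" by (rule rtranclE) (use assms in auto)
qed

lemma rt_conn:
  assumes lt: "\<forall>p c. (p,c)\<in>x \<longrightarrow> p<c"
    and un: "\<forall>p p' c. (p,c)\<in>x \<and> (p',c)\<in>x \<longrightarrow> p=p'"
    and c: "connected_in x a b"
  shows "rt x a = rt x b"
  using c unfolding connected_in_def
proof (induction rule: rtrancl_induct)
  case base
  then show ?case by simp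
next
  case (step y z)
  from step(2) have "rt x z = rt x y"
  proof
    assume "(y,z)\<in>x" then show ?thesis by (rule rt_edge[OF lt un])
  next
    assume "(y,z)\<in>x\<inverse>" then have "(z,y)\<in>x" by simp
    then show ?thesis using rt_edge[OF lt un] by metis
  qed
  then show ?case using step(3) by simp
qed

lemma nonempty_has_asc:
  assumes pf: "priority_forest n x" and ne: "x \<noteq> {}"
  shows "\<exists>c. (c, Suc c) \<in> x"
proof -
  have fin: "finite x" using pf by (rule pf_finite)
  have sub: "x \<subseteq> {0..n} \<times> {0..n}" and lt: "\<forall>p c. (p,c)\<in>x \<longrightarrow> p<c"
    and un: "\<forall>p p' c. (p,c)\<in>x \<and> (p',c)\<in>x \<longrightarrow> p=p'"
    and cond: "\<forall>a b c d. a \<in> {0..n} \<and> b \<in> {0..n} \<and> c \<in> {0..n} \<and> d \<in> {0..n} \<and>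
        connected_in x a c \<and> connected_in x b d \<and> \<not> connected_in x a b \<and> a < b \<longrightarrow> c < d"
    using pf unfolding priority_forest_def by blast+
  define c where "c = Min (snd ` x)"
  have "c \<in> snd ` x" unfolding c_def using fin ne by (intro Min_in) auto
  then obtain p where pc: "(p,c)\<in>x" by force
  have cmin: "c \<le> w" if "(q,w)\<in>x" for q w
    unfolding c_def using fin that by (intro Min_le) force+
  have pclt: "p < c" using lt pc by blast
  have cn: "c \<le> n" using sub pc by auto
  show ?thesis
  proof (cases "Suc p = c")
    case True then show ?thesis using pc by blast
  next
    case False
    with pclt have pw: "p < c - 1" by arith
    have conn: "connected_in x p (c-1)"
    proof (rule ccontr)
      assume nc: "\<not> connected_in x p (c-1)"
      have "connected_in x p c" unfolding connected_in_def using pc by blast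
      moreover have "connected_in x (c-1) (c-1)" by (simp add: connected_in_def)
      ultimately have "c < c - 1" using cond[rule_format, of p "c-1" c "c-1"] nc pw cn pclt by auto
      then show False by simp
    qed
    have r1: "rt x p = p"
      by (rule rt_root) (use cmin pclt in force)
    have r2: "rt x (c-1) = c-1"
      by (rule rt_root) (use cmin pclt in force)
    have "rt x p = rt x (c-1)" by (rule rt_conn[OF lt un conn])
    with r1 r2 pw show ?thesis by simp
  qed
qed

lemma conn_R:
  assumes q: "\<forall>e\<in>Q. snd e = Suc (fst e)" and c: "connected_in Q a b"
  shows "\<forall>k. min a b \<le> k \<and> k < max a b \<longrightarrow> (k,Suc k)\<in>Q"
  using c unfolding connected_in_def
proof (induction rule: rtrancl_induct)
  case base
  then show ?case by auto
next
  case (step y z)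
  from step(2) show ?case
  proof
    assume yz: "(y,z)\<in>Q"
    then have z: "z = Suc y" using q by force
    show ?thesis
    proof (intro allI impI)
      fix k assume k: "min a z \<le> k \<and> k < max a z"
      then have "k = y \<or> (min a y \<le> k \<and> k < max a y)" using z by auto
      then show "(k, Suc k) \<in> Q" using step(3) yz z by auto
    qed
  next
    assume "(y,z)\<in>Q\<inverse>" then have zy: "(z,y)\<in>Q" by simp
    then have y: "y = Suc z" using q by force
    show ?thesis
    proof (intro allI impI)
      fix k assume k: "min a z \<le> k \<and> k < max a z"
      then have "k = z \<or> (min a y \<le> k \<and> k < max a y)" using y by auto
      then show "(k, Suc k) \<in> Q" using step(3) zy y by auto
    qed
  qed
qed

lemma R_conn:
  assumes "\<forall>k. a \<le> k \<and> k < a + d \<longrightarrow> (k,Suc k)\<in>Q"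
  shows "connected_in Q a (a + d)"
  using assms
proof (induction d)
  case 0
  then show ?case by (simp add: connected_in_def)
next
  case (Suc d)
  then have c: "connected_in Q a (a + d)" by auto
  have "(a + d, Suc (a + d)) \<in> Q" using Suc.prems by auto
  then show ?case using c unfolding connected_in_def
    by (metis UnI1 add_Suc_right rtrancl_into_rtrancl)
qed

lemma asc_pf:
  assumes pf: "priority_forest n E" and QA: "Q \<subseteq> Asc E"
  shows "priority_forest n Q"
proof -
  have QE: "Q \<subseteq> E" using QA unfolding Asc_def by auto
  have q: "\<forall>e\<in>Q. snd e = Suc (fst e)" using QA unfolding Asc_def by auto
  have main: "c < d" if ac: "connected_in Q a c" and bd: "connected_in Q b d"
    and nab: "\<not> connected_in Q a b" and ab: "a < b" for a b c d
  proof -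
    have "\<exists>k. a \<le> k \<and> k < b \<and> (k, Suc k) \<notin> Q"
    proof (rule ccontr)
      assume "\<not> (\<exists>k. a \<le> k \<and> k < b \<and> (k, Suc k) \<notin> Q)"
      then have "\<forall>k. a \<le> k \<and> k < a + (b - a) \<longrightarrow> (k,Suc k)\<in>Q" using ab by auto
      then have "connected_in Q a (a + (b - a))" by (rule R_conn)
      with ab nab show False by simp
    qed
    then obtain k where k: "a \<le> k" "k < b" "(k, Suc k) \<notin> Q" by blast
    have "c \<le> k"
    proof (rule ccontr)
      assume "\<not> c \<le> k"
      then show False using conn_R[OF q ac] k by auto
    qed
    moreover have "k < d"
    proof (rule ccontr)
      assume "\<not> k < d"
      then show False using conn_R[OF q bd] k by auto
    qed
    ultimately show ?thesis by simp
  qed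
  have E1: "E \<subseteq> {0..n} \<times> {0..n}" and E2: "\<forall>p c. (p, c) \<in> E \<longrightarrow> p < c"
    and E3: "\<forall>p p' c. (p, c) \<in> E \<and> (p', c) \<in> E \<longrightarrow> p = p'"
    using pf unfolding priority_forest_def by blast+
  have Q1: "Q \<subseteq> {0..n} \<times> {0..n}" using E1 QE by blast
  have Q2: "\<forall>p c. (p, c) \<in> Q \<longrightarrow> p < c" using E2 QE by blast
  have Q3: "\<forall>p p' c. (p, c) \<in> Q \<and> (p', c) \<in> Q \<longrightarrow> p = p'" using E3 QE by blast
  have Q4: "\<forall>a b c d. a \<in> {0..n} \<and> b \<in> {0..n} \<and> c \<in> {0..n} \<and> d \<in> {0..n} \<and>
        connected_in Q a c \<and> connected_in Q b d \<and> \<not> connected_in Q a b \<and> a < b \<longrightarrow> c < d"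
    using main by blast
  show ?thesis unfolding priority_forest_def using Q1 Q2 Q3 Q4 by blast
qed

lemma alt_sum:
  assumes "finite B" "B \<noteq> {}"
  shows "(\<Sum>X\<in>Pow B. (-1::int) ^ card X) = 0"
proof -
  have "(\<Prod>x\<in>B. (1::int) - 1) = (\<Sum>X\<in>Pow B. (-1) ^ card X * (\<Prod>x\<in>X. 1) * (\<Prod>x\<in>B-X. 1))"
    by (rule prod_diff_conv_sum[OF assms(1)])
  then have e: "(\<Prod>x\<in>B. (1::int) - 1) = (\<Sum>X\<in>Pow B. (-1) ^ card X)" by simp
  have "(\<Prod>x\<in>B. (1::int) - 1) = 0" using assms by (intro prod_zero) auto
  with e show ?thesis by simp
qed

lemma mob_val:
  assumes pf: "priority_forest n E" and x: "x \<in> ideal_PF n E"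
  shows "mobius (ideal_PF n E) {} x = (if x \<subseteq> Asc E then (-1)^card x else 0)"
  using x
proof (induction "card x" arbitrary: x rule: less_induct)
  case less
  let ?F = "ideal_PF n E"
  let ?f = "\<lambda>z. if z \<subseteq> Asc E then (-1::int)^card z else 0"
  have finE: "finite E" using pf by (rule pf_finite)
  have xE: "x \<subseteq> E" and pfx: "priority_forest n x" using less.prems unfolding ideal_PF_def by auto
  have finx: "finite x" using xE finE finite_subset by blast
  show ?case
  proof (cases "x = {}")
    case True
    then show ?thesis by (simp add: mobius.simps)
  next
    case False
    define S where "S = {z \<in> ?F. {} \<subseteq> z \<and> z \<subset> x}"
    define B where "B = x \<inter> Asc E"
    define T where "T = Pow B - {x}"
    have m1: "mobius ?F {} x = - (\<Sum>z\<in>S. mobius ?F {} z)"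
      using False finx unfolding S_def by (subst mobius.simps) simp
    have "(\<Sum>z\<in>S. mobius ?F {} z) = (\<Sum>z\<in>S. ?f z)"
    proof (rule sum.cong)
      fix z assume "z \<in> S"
      then have "z \<in> ?F" "z \<subset> x" unfolding S_def by auto
      moreover then have "card z < card x" using finx psubset_card_mono by blast
      ultimately show "mobius ?F {} z = ?f z" using less.hyps by blast
    qed simp
    also have "\<dots> = (\<Sum>z\<in>T. ?f z)"
    proof (rule sum.mono_neutral_right)
      show "finite S" by (rule finite_subset[of _ "Pow x"]) (use finx in \<open>auto simp: S_def\<close>)
      show "T \<subseteq> S" unfolding T_def S_def B_def ideal_PF_def
        using asc_pf[OF pf] Asc_def by auto
      show "\<forall>i\<in>S - T. ?f i = 0" unfolding S_def T_def B_def by auto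
    qed
    also have "\<dots> = (\<Sum>z\<in>T. (-1)^card z)"
      by (rule sum.cong) (auto simp: T_def B_def)
    finally have s1: "(\<Sum>z\<in>S. mobius ?F {} z) = (\<Sum>z\<in>T. (-1)^card z)" .
    obtain c where "(c, Suc c) \<in> x" using nonempty_has_asc[OF pfx False] by blast
    then have Bne: "B \<noteq> {}" unfolding B_def Asc_def using xE by auto
    have finB: "finite B" unfolding B_def using finx by simp
    have z: "(\<Sum>z\<in>Pow B. (-1::int)^card z) = 0" by (rule alt_sum[OF finB Bne])
    show ?thesis
    proof (cases "x \<subseteq> Asc E")
      case True
      then have "x \<in> Pow B" unfolding B_def by auto
      then have "(\<Sum>z\<in>Pow B. (-1::int)^card z) = (-1)^card x + (\<Sum>z\<in>T. (-1)^card z)"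
        unfolding T_def using finB by (simp add: sum.remove)
      then show ?thesis using m1 s1 z True by simp
    next
      case False
      then have "x \<notin> Pow B" unfolding B_def by auto
      then have "T = Pow B" unfolding T_def by auto
      then show ?thesis using m1 s1 z False by simp
    qed
  qed
qed

lemma smult_neg1: "smult ((-1::int)^k) p = (-1)^k * p"
  by (induct k) simp_all

lemma card_Asc:
  assumes pf: "priority_forest n E"
  shows "card (Asc E) = sasc n E"
proof -
  have sub: "E \<subseteq> {0..n} \<times> {0..n}" using pf unfolding priority_forest_def by blast
  have "Asc E = (\<lambda>i. (i-1,i)) ` {i \<in> {1..n}. (i - 1, i) \<in> E}"
  proof
    show "Asc E \<subseteq> (\<lambda>i. (i-1,i)) ` {i \<in> {1..n}. (i - 1, i) \<in> E}"
    proof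
      fix e assume "e \<in> Asc E"
      then obtain p where e: "e = (p, Suc p)" "(p, Suc p) \<in> E" unfolding Asc_def
        by (cases e) auto
      then have "Suc p \<le> n" using sub by auto
      then show "e \<in> (\<lambda>i. (i-1,i)) ` {i \<in> {1..n}. (i - 1, i) \<in> E}"
        using e by (intro image_eqI[of _ _ "Suc p"]) auto
    qed
    show "(\<lambda>i. (i-1,i)) ` {i \<in> {1..n}. (i - 1, i) \<in> E} \<subseteq> Asc E"
      unfolding Asc_def by auto
  qed
  moreover have "inj_on (\<lambda>i. (i-1,i::nat)) A" for A by (rule inj_onI) auto
  ultimately show ?thesis unfolding sasc_def by (simp add: card_image)
qed

lemma a_eq: "[:0,1:] - 1 = [:-1,1::int:]" by (simp add: one_pCons)

lemma part1:
  assumes pf: "priority_forest n E"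
  shows "char_poly_PF n E = [:0, 1:] ^ (card E - sasc n E) * [:-1, 1:] ^ sasc n E"
proof -
  let ?F = "ideal_PF n E"
  let ?A = "Asc E"
  let ?m = "card E"
  let ?s = "sasc n E"
  have finE: "finite E" using pf by (rule pf_finite)
  have AE: "?A \<subseteq> E" unfolding Asc_def by auto
  have finA: "finite ?A" using AE finE finite_subset by blast
  have cA: "card ?A = ?s" by (rule card_Asc[OF pf])
  have sm: "?s \<le> ?m" using cA AE finE card_mono by metis
  have "char_poly_PF n E = (\<Sum>Q\<in>?F. smult (mobius ?F {} Q) (monom 1 (?m - card Q)))"
    unfolding char_poly_PF_def ..
  also have "\<dots> = (\<Sum>Q\<in>Pow ?A. smult (mobius ?F {} Q) (monom 1 (?m - card Q)))"
  proof (rule sum.mono_neutral_right)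
    show "finite ?F" by (rule finite_subset[of _ "Pow E"]) (use finE in \<open>auto simp: ideal_PF_def\<close>)
    show "Pow ?A \<subseteq> ?F" unfolding ideal_PF_def using asc_pf[OF pf] AE by auto
    show "\<forall>i\<in>?F - Pow ?A. smult (mobius ?F {} i) (monom 1 (?m - card i)) = 0"
      using mob_val[OF pf] by auto
  qed
  also have "\<dots> = (\<Sum>Q\<in>Pow ?A. (-1)^card Q * [:0,1:] ^ (?m - card Q))"
  proof (rule sum.cong)
    fix Q assume "Q \<in> Pow ?A"
    moreover then have "Q \<in> ?F" unfolding ideal_PF_def using asc_pf[OF pf] AE by auto
    ultimately have "mobius ?F {} Q = (-1)^card Q" using mob_val[OF pf] by simp
    then show "smult (mobius ?F {} Q) (monom 1 (?m - card Q)) = (-1)^card Q * [:0,1:] ^ (?m - card Q)"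
      by (simp add: monom_altdef smult_neg1)
  qed simp
  also have "\<dots> = (\<Sum>Q\<in>Pow ?A. [:0,1:] ^ (?m - ?s) * ((-1)^card Q * 1 * [:0,1:] ^ card (?A - Q)))"
  proof (rule sum.cong)
    fix Q assume Q: "Q \<in> Pow ?A"
    then have "card Q \<le> ?s" using cA finA card_mono by fastforce
    moreover have "card (?A - Q) = ?s - card Q" using Q cA finA
      by (simp add: card_Diff_subset finite_subset)
    ultimately have "?m - card Q = (?m - ?s) + card (?A - Q)" using sm by simp
    then show "(-1)^card Q * [:0,1:] ^ (?m - card Q) = [:0,1:] ^ (?m - ?s) * ((-1)^card Q * 1 * [:0,1:] ^ card (?A - Q))"
      by (simp add: power_add mult.left_commute)
  qed simp
  also have "\<dots> = [:0,1:] ^ (?m - ?s) * (\<Sum>Q\<in>Pow ?A. (-1)^card Q * (\<Prod>x\<in>Q. 1) * (\<Prod>x\<in>?A - Q. [:0,1:]))"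
    by (simp add: sum_distrib_left)
  also have "\<dots> = [:0,1:] ^ (?m - ?s) * (\<Prod>x\<in>?A. [:0,1:] - 1)"
    by (subst prod_diff_conv_sum[OF finA]) simp
  also have "\<dots> = [:0,1:] ^ (?m - ?s) * [:-1,1:] ^ ?s"
    using cA finA by (simp add: a_eq)
  finally show ?thesis .
qed

lemma occ_fin: "finite (occ \<pi> k)"
  by (induct k) auto

lemma occ_eq: "occ \<pi> k = spot \<pi> ` {1..k}"
proof (induct k)
  case 0 then show ?case by simp
next
  case (Suc k)
  have "{1..Suc k} = insert (Suc k) {1..k}" by auto
  moreover have "spot \<pi> (Suc k) = (LEAST s. \<pi> (Suc k) \<le> s \<and> s \<notin> occ \<pi> k)"
    unfolding spot_def by simp
  ultimately show ?case using Suc by (simp only: occ.simps image_insert)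
qed

lemma spot_prop: "\<pi> i \<le> spot \<pi> i \<and> spot \<pi> i \<notin> occ \<pi> (i - 1)"
proof -
  have "finite (occ \<pi> (i - 1) \<union> {..<\<pi> i})" using occ_fin by simp
  then obtain s where "s \<notin> occ \<pi> (i - 1) \<union> {..<\<pi> i}"
    using ex_new_if_finite[OF infinite_UNIV_nat] by blast
  then have "\<pi> i \<le> s \<and> s \<notin> occ \<pi> (i - 1)" by auto
  then show ?thesis unfolding spot_def by (rule LeastI)
qed

lemma spot_inj: "inj_on (spot \<pi>) {1..m}"
proof -
  have ne: "spot \<pi> i \<noteq> spot \<pi> j" if "1 \<le> i" "i < j" for i j
  proof -
    have "i \<in> {1..j-1}" using that by auto
    then have "spot \<pi> i \<in> occ \<pi> (j - 1)" unfolding occ_eq by (rule imageI)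
    then show ?thesis using spot_prop[of \<pi> j] by auto
  qed
  show ?thesis
  proof (rule inj_onI)
    fix i j assume "i \<in> {1..m}" "j \<in> {1..m}" "spot \<pi> i = spot \<pi> j"
    then show "i = j" using ne by (metis atLeastAtMost_iff linorder_neqE_nat)
  qed
qed

lemma be_spot:
  assumes j: "j \<in> {1..m}" shows "birds_eye m \<pi> (spot \<pi> j) = j"
  unfolding birds_eye_def
proof (rule the_equality)
  show "j \<in> {1..m} \<and> spot \<pi> j = spot \<pi> j" using j by simp
  fix i assume "i \<in> {1..m} \<and> spot \<pi> i = spot \<pi> j"
  then show "i = j" using inj_onD[OF spot_inj[of \<pi> m]] j by blast
qed

lemma pf_eq: "pf_forest m \<pi> = (\<lambda>j. (\<pi> j - 1, spot \<pi> j)) ` {1..m}"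
proof -
  have "{(\<pi> (birds_eye m \<pi> s) - 1, s) | s. s \<in> spot \<pi> ` {1..m}} = (\<lambda>s. (\<pi> (birds_eye m \<pi> s) - 1, s)) ` (spot \<pi> ` {1..m})" by blast
  also have "\<dots> = (\<lambda>j. (\<pi> (birds_eye m \<pi> (spot \<pi> j)) - 1, spot \<pi> j)) ` {1..m}" by (simp only: image_image)
  also have "\<dots> = (\<lambda>j. (\<pi> j - 1, spot \<pi> j)) ` {1..m}" by (rule image_cong) (simp_all only: be_spot)
  finally show ?thesis unfolding pf_forest_def .
qed

lemma lucky_sasc:
  assumes "parking_function m n \<pi>" and E: "pf_forest m \<pi> = E"
  shows "lucky m \<pi> = sasc n E"
proof -
  have pj: "\<pi> j \<in> {1..n}" "spot \<pi> j \<le> n" if "j \<in> {1..m}" for j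
    using assms that unfolding parking_function_def by auto
  have E': "E = (\<lambda>j. (\<pi> j - 1, spot \<pi> j)) ` {1..m}" unfolding E[symmetric] by (rule pf_eq)
  let ?L = "{j \<in> {1..m}. spot \<pi> j = \<pi> j}"
  have eq: "{i \<in> {1..n}. (i - 1, i) \<in> E} = spot \<pi> ` ?L"
  proof
    show "{i \<in> {1..n}. (i - 1, i) \<in> E} \<subseteq> spot \<pi> ` ?L"
    proof
      fix i assume i: "i \<in> {i \<in> {1..n}. (i - 1, i) \<in> E}"
      then have "(i - 1, i) \<in> (\<lambda>j. (\<pi> j - 1, spot \<pi> j)) ` {1..m}" using E' by simp
      then obtain j where j: "j \<in> {1..m}" "i - 1 = \<pi> j - 1" "i = spot \<pi> j"
        by blast
      have "i \<ge> 1" using i by simp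
      moreover have "\<pi> j \<ge> 1" using pj(1)[OF j(1)] by simp
      ultimately have "\<pi> j = i" using j(2) by linarith
      then have "j \<in> ?L" using j(1) j(3) by simp
      then show "i \<in> spot \<pi> ` ?L" using j(3) by (rule rev_image_eqI)
    qed
    show "spot \<pi> ` ?L \<subseteq> {i \<in> {1..n}. (i - 1, i) \<in> E}"
    proof
      fix i assume "i \<in> spot \<pi> ` ?L"
      then obtain j where j: "j \<in> {1..m}" "spot \<pi> j = \<pi> j" "i = spot \<pi> j" by blast
      have "(\<pi> j - 1, spot \<pi> j) \<in> E" unfolding E' using j(1) by (rule imageI)
      then have "(i - 1, i) \<in> E" using j(2) j(3) by simp
      moreover have "i \<in> {1..n}" using pj[OF j(1)] j(2) j(3) by simp
      ultimately show "i \<in> {i \<in> {1..n}. (i - 1, i) \<in> E}" by simp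
    qed
  qed
  have inj: "inj_on (spot \<pi>) ?L"
    using spot_inj by (rule inj_on_subset) auto
  have "card (spot \<pi> ` ?L) = card ?L" using inj by (rule card_image)
  then show ?thesis unfolding sasc_def lucky_def eq by (rule sym)
qed

theorem theorem5p15:
  fixes n m :: nat and E :: "(nat \<times> nat) set"
  assumes "priority_forest n E" and "card E = m"
  shows "char_poly_PF n E = [:0, 1:] ^ (m - sasc n E) * [:-1, 1:] ^ sasc n E
         \<and> (\<forall>\<pi>. parking_function m n \<pi> \<and> pf_forest m \<pi> = E \<longrightarrow>
              char_poly_PF n E = [:0, 1:] ^ (m - lucky m \<pi>) * [:-1, 1:] ^ lucky m \<pi>)"
proof -
  have p1: "char_poly_PF n E = [:0, 1:] ^ (m - sasc n E) * [:-1, 1:] ^ sasc n E"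
    using part1[OF assms(1)] assms(2) by simp
  show ?thesis
  proof (intro conjI allI impI)
    show "char_poly_PF n E = [:0, 1:] ^ (m - sasc n E) * [:-1, 1:] ^ sasc n E" by (rule p1)
    fix \<pi> assume h: "parking_function m n \<pi> \<and> pf_forest m \<pi> = E"
    then have "lucky m \<pi> = sasc n E" using lucky_sasc by blast
    then show "char_poly_PF n E = [:0, 1:] ^ (m - lucky m \<pi>) * [:-1, 1:] ^ lucky m \<pi>"
      using p1 by simp
  qed
qed

end
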